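(* Fix $\alpha\ge1$, $c>0$. For $t\ge0$ let $\Lambda_t$ be the qubit Pauli channel $\Lambda_t[\rho]=\sum_{\mu=0}^3p_\mu(t)\sigma_\mu\rho\sigma_\mu$ ($\sigma_0=\mathbb 1$, $\sigma_{1,2,3}$ the Pauli matrices) with $p_0(t)=\tfrac14[1+e^{-2\alpha ct}(1+2e^{\alpha ct}\cosh^\alpha(ct))]$, $p_1(t)=p_2(t)=\tfrac14(1-e^{-2\alpha ct})$, $p_3(t)=\tfrac14[1+e^{-2\alpha ct}(1-2e^{\alpha ct}\cosh^\alpha(ct))]$ (the solution of $\dot\rho=\sum_i\gamma_i(t)(\sigma_i\rho\sigma_i-\rho)$ with $\gamma_1=\gamma_2=\alpha c/2$, $\gamma_3(t)=-\tfrac{\alpha c}{2}\tanh(ct)$). Each $\Lambda_t$ is invertible; for $0\le s\le t$ set $V_{t,s}=\Lambda_t\circ\Lambda_s^{-1}$ and $\Omega_{V_{t,s}}=2(V_{t,s}\otimes\mathrm{id})[|\Phi^+\rangle\langle\Phi^+|]$. Then, with $\lambda_\tau=e^{-c\tau}$ and $\Gamma_{t,s}=\lambda_{t-s}\cosh(ct)\,\mathrm{sech}(cs)$, $$\Omega_{V_{t,s}}=p_1P_{\Phi^+}+p_2P_{\Phi^-}+(1-p_1-p_2)P_{\Psi^+}^{T_B},\qquad p_1=\tfrac12(\lambda_{t-s}^{2\alpha}+\Gamma_{t,s}^\alpha),\ p_2=\tfrac12(1-\Gamma_{t,s}^\alpha),$$ where $p_1\ge0$, $p_2\ge0$, $p_1+p_2\le1$.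 Consequently $V_{t,s}[X]=p\,\mathcal E_1[X]+(1-p)\,\mathcal E_2[X^T]$ for some $p\in[0,1]$ and CPTP qubit maps $\mathcal E_1,\mathcal E_2$.
   Context: $|\Phi^\pm\rangle=(|00\rangle\pm|11\rangle)/\sqrt2$, $|\Psi^\pm\rangle=(|01\rangle\pm|10\rangle)/\sqrt2$, $P_\psi=2|\psi\rangle\langle\psi|$, and $T_B$ denotes partial transposition on the second qubit. *)

theory Defs
  imports "HOL-Analysis.Analysis"
begin

text \<open>Qubit operators: 2x2 complex matrices, M $ i $ j = row i, column j.
  Two-qubit operators: matrices indexed by 2 \<times> 2, index (a,b) = |a b>,
  first component = first qubit (system), second = second qubit (B).\<close>

type_synonym qmat = "complex^2^2"
type_synonym qqmat = "complex^(2 \<times> 2)^(2 \<times> 2)"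

definition sigma :: "nat \<Rightarrow> qmat" where
  "sigma \<mu> =
    (if \<mu> = 0 then (\<chi> i j. if i = j then 1 else 0)
     else if \<mu> = 1 then (\<chi> i j. if i \<noteq> j then 1 else 0)
     else if \<mu> = 2 then (\<chi> i j. if i = 0 \<and> j = 1 then - \<i> else if i = 1 \<and> j = 0 then \<i> else 0)
     else (\<chi> i j. if i = j then (if i = 0 then 1 else -1) else 0))"

definition pauli_p :: "real \<Rightarrow> real \<Rightarrow> nat \<Rightarrow> real \<Rightarrow> real" where
  "pauli_p \<alpha> c \<mu> t =
    (if \<mu> = 0 then (1 + exp (-2*\<alpha>*c*t) * (1 + 2 * exp (\<alpha>*c*t) * cosh (c*t) powr \<alpha>)) / 4
     else if \<mu> = 1 \<or> \<mu> = 2 then (1 - exp (-2*\<alpha>*c*t)) / 4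
     else (1 + exp (-2*\<alpha>*c*t) * (1 - 2 * exp (\<alpha>*c*t) * cosh (c*t) powr \<alpha>)) / 4)"

definition Lambda :: "real \<Rightarrow> real \<Rightarrow> real \<Rightarrow> qmat \<Rightarrow> qmat" where
  "Lambda \<alpha> c t \<rho> = (\<Sum>\<mu><4. pauli_p \<alpha> c \<mu> t *\<^sub>R (sigma \<mu> ** \<rho> ** sigma \<mu>))"

definition cscale :: "complex \<Rightarrow> qmat \<Rightarrow> qmat" where
  "cscale a M = (\<chi> i j. a * M $ i $ j)"

text \<open>(E \<otimes> id) acting on two-qubit operators (E on the first qubit).\<close>
definition map_id :: "(qmat \<Rightarrow> qmat) \<Rightarrow> qqmat \<Rightarrow> qqmat" where
  "map_id E X = (\<chi> x y. E (\<chi> i j. X $ (i, snd x) $ (j, snd y)) $ fst x $ fst y)"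

definition Phi_p :: "complex^(2 \<times> 2)" where
  "Phi_p = (\<chi> x. if fst x = snd x then 1 / complex_of_real (sqrt 2) else 0)"
definition Phi_m :: "complex^(2 \<times> 2)" where
  "Phi_m = (\<chi> x. if fst x = snd x then (if fst x = 0 then 1 else -1) / complex_of_real (sqrt 2) else 0)"
definition Psi_p :: "complex^(2 \<times> 2)" where
  "Psi_p = (\<chi> x. if fst x \<noteq> snd x then 1 / complex_of_real (sqrt 2) else 0)"
definition Psi_m :: "complex^(2 \<times> 2)" where
  "Psi_m = (\<chi> x. if fst x \<noteq> snd x then (if fst x = 0 then 1 else -1) / complex_of_real (sqrt 2) else 0)"

definition proj :: "complex^(2 \<times> 2) \<Rightarrow> qqmat" where
  "proj \<psi> = (\<chi> x y. 2 * \<psi> $ x * cnj (\<psi> $ y))"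

definition ptrans :: "qqmat \<Rightarrow> qqmat" where
  "ptrans X = (\<chi> x y. X $ (fst x, snd y) $ (fst y, snd x))"

definition choi :: "(qmat \<Rightarrow> qmat) \<Rightarrow> qqmat" where
  "choi E = map_id E (proj Phi_p)"

definition psd :: "complex^'n^'n \<Rightarrow> bool" where
  "psd M \<longleftrightarrow> (\<forall>v. let q = (\<Sum>i\<in>UNIV. \<Sum>j\<in>UNIV. cnj (v $ i) * M $ i $ j * v $ j)
                    in Im q = 0 \<and> Re q \<ge> 0)"

definition qlinear :: "(qmat \<Rightarrow> qmat) \<Rightarrow> bool" where
  "qlinear E \<longleftrightarrow> (\<forall>a X Y. E (X + Y) = E X + E Y \<and> E (cscale a X) = cscale a (E X))"

definition CPTP :: "(qmat \<Rightarrow> qmat) \<Rightarrow> bool" where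
  "CPTP E \<longleftrightarrow> qlinear E \<and> psd (choi E) \<and> (\<forall>X. trace (E X) = trace X)"

definition Vmap :: "real \<Rightarrow> real \<Rightarrow> real \<Rightarrow> real \<Rightarrow> qmat \<Rightarrow> qmat" where
  "Vmap \<alpha> c t s = Lambda \<alpha> c t \<circ> inv (Lambda \<alpha> c s)"

end

theory Submission imports Defs begin
lemma ex2: "(x::2) = 0 \<or> x = 1"
  using exhaust_2[of x] by auto
lemma two0: "(2::2) = 0" by simp
lemma sum2: "sum f (UNIV::2 set) = f 0 + f 1"
  using sum_2[of f] two0 by (simp add: add.commute)
lemma meq: "(\<And>i j. A$i$j = B$i$j) \<Longrightarrow> A = B" by (simp add: vec_eq_iff)

lemma pauli_gen:
  fixes q :: "nat \<Rightarrow> real"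
  shows "(\<Sum>\<mu><4. q \<mu> *\<^sub>R (sigma \<mu> ** X ** sigma \<mu>)) =
   (\<chi> i j. if i = j then (if i = 0 then of_real (q 0 + q 3) * X$0$0 + of_real (q 1 + q 2) * X$1$1
                          else of_real (q 1 + q 2) * X$0$0 + of_real (q 0 + q 3) * X$1$1)
           else if i = 0 then of_real (q 0 - q 3) * X$0$1 + of_real (q 1 - q 2) * X$1$0
           else of_real (q 0 - q 3) * X$1$0 + of_real (q 1 - q 2) * X$0$1)"
proof -
  have s: "(\<Sum>\<mu><4. q \<mu> *\<^sub>R (sigma \<mu> ** X ** sigma \<mu>)) =
     q 0 *\<^sub>R (sigma 0 ** X ** sigma 0) + q 1 *\<^sub>R (sigma 1 ** X ** sigma 1) +
     q 2 *\<^sub>R (sigma 2 ** X ** sigma 2) + q 3 *\<^sub>R (sigma 3 ** X ** sigma 3)"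
    by (simp add: eval_nat_numeral)
  show ?thesis unfolding s
    apply (rule meq)
    subgoal for i j
      using ex2[of i] ex2[of j]
      by (auto simp: matrix_matrix_mult_def sigma_def sum2; simp add: scaleR_conv_of_real algebra_simps)
    done
qed

definition DD :: "real \<Rightarrow> real \<Rightarrow> qmat \<Rightarrow> qmat" where
  "DD G L X = (\<chi> i j. if i = j then (if i = 0 then of_real ((1+L)/2) * X$0$0 + of_real ((1-L)/2) * X$1$1
                          else of_real ((1-L)/2) * X$0$0 + of_real ((1+L)/2) * X$1$1)
           else of_real G * X$i$j)"

lemma DD_comp: "DD G L (DD G' L' X) = DD (G*G') (L*L') X"
  apply (rule meq)
  subgoal for i j
    using ex2[of i] ex2[of j]
    by (auto simp: DD_def; simp add: field_simps; simp add: algebra_simps)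
  done

lemma DD_11: "DD 1 1 X = X"
  apply (rule meq)
  subgoal for i j
    using ex2[of i] ex2[of j]
    by (auto simp: DD_def)
  done

lemma DD_inv:
  assumes "G \<noteq> 0" "L \<noteq> 0"
  shows "bij (DD G L)" "inv (DD G L) = DD (1/G) (1/L)"
proof -
  have a: "DD G L \<circ> DD (1/G) (1/L) = id" "DD (1/G) (1/L) \<circ> DD G L = id"
    using assms by (auto simp: fun_eq_iff DD_comp DD_11)
  show "bij (DD G L)" by (rule o_bij[OF a(2) a(1)])
  show "inv (DD G L) = DD (1/G) (1/L)" by (rule inv_unique_comp[OF a(1) a(2)])
qed

lemma Lambda_DD:
  "Lambda \<alpha> c t = DD (exp (-\<alpha>*c*t) * cosh (c*t) powr \<alpha>) (exp (-2*\<alpha>*c*t))"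
proof -
  let ?q = "\<lambda>\<mu>. pauli_p \<alpha> c \<mu> t"
  have e: "exp (-2*\<alpha>*c*t) * exp (\<alpha>*c*t) = exp (-\<alpha>*c*t)"
    unfolding exp_add[symmetric] by (rule arg_cong[where f=exp]) linarith
  have e2: "exp (\<alpha> * (c * t)) * exp (- (\<alpha> * (c * (t * 2)))) = exp (- (\<alpha> * (c * t)))"
    unfolding exp_add[symmetric] by (rule arg_cong[where f=exp]) linarith
  have q1: "?q 0 + ?q 3 = (1 + exp (-2*\<alpha>*c*t))/2" "?q 1 + ?q 2 = (1 - exp (-2*\<alpha>*c*t))/2"
     "?q 1 - ?q 2 = 0" "?q 0 - ?q 3 = exp (-\<alpha>*c*t) * cosh (c*t) powr \<alpha>"
    by (auto simp: pauli_p_def field_simps e2)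
  show ?thesis
    apply (rule ext)
    unfolding Lambda_def pauli_gen q1 
    apply (rule meq)
    subgoal for X i j using ex2[of i] ex2[of j] by (auto simp: DD_def)
    done
qed

lemma sq2: "2 * (u / complex_of_real (sqrt 2)) * cnj (v / complex_of_real (sqrt 2)) = u * cnj v"
proof -
  have "complex_of_real (sqrt 2) * complex_of_real (sqrt 2) = 2"
    by (simp flip: of_real_mult)
  then show ?thesis by (simp add: field_simps)
qed

lemma forall2: "(\<forall>i::2. P i) \<longleftrightarrow> P 0 \<and> P 1" using ex2 by metis
lemma forall22: "(\<forall>x::2\<times>2. P x) \<longleftrightarrow> P (0,0) \<and> P (0,1) \<and> P (1,0) \<and> P (1,1)"
  by (simp add: split_paired_All forall2)

lemma proj_Phi_p: "proj Phi_p $ x $ y = (if fst x = snd x \<and> fst y = snd y then 1 else 0)"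
  by (simp add: proj_def Phi_p_def sq2[of 1 1, simplified])

lemma proj_Phi_m: "proj Phi_m $ x $ y = (if fst x = snd x \<and> fst y = snd y then (if fst x = fst y then 1 else -1) else 0)"
  using ex2[of "fst x"] ex2[of "fst y"]
  by (auto simp: proj_def Phi_m_def sq2[of 1 1, simplified] sq2[of 1 "-1", simplified] sq2[of "-1" 1, simplified] sq2[of "-1" "-1", simplified])

lemma ptrans_Psi: "ptrans (proj Psi_p) $ x $ y = (if fst x \<noteq> snd y \<and> fst y \<noteq> snd x then 1 else 0)"
  by (simp add: ptrans_def proj_def Psi_p_def sq2[of 1 1, simplified])

lemma choi_entry: "choi E $ x $ y = E (\<chi> i j. if i = snd x \<and> j = snd y then 1 else 0) $ fst x $ fst y"
  unfolding choi_def map_id_def by (simp add: proj_Phi_p)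

lemma choi_DD:
  "choi (DD G L) = ((L+G)/2) *\<^sub>R proj Phi_p + ((1-G)/2) *\<^sub>R proj Phi_m
     + (1 - (L+G)/2 - (1-G)/2) *\<^sub>R ptrans (proj Psi_p)"
proof -
  have "\<forall>x y. choi (DD G L) $ x $ y = (((L+G)/2) *\<^sub>R proj Phi_p + ((1-G)/2) *\<^sub>R proj Phi_m
     + (1 - (L+G)/2 - (1-G)/2) *\<^sub>R ptrans (proj Psi_p)) $ x $ y"
    unfolding forall22
    by (simp add: choi_entry proj_Phi_p proj_Phi_m ptrans_Psi DD_def; simp add: scaleR_conv_of_real field_simps)
  then show ?thesis by (simp add: vec_eq_iff)
qed

lemma sum22: "sum f (UNIV::(2\<times>2) set) = f (0,0) + f (0,1) + f (1,0) + f (1,1)"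
proof -
  have eq: "(UNIV::(2\<times>2) set) = {(0,0),(0,1),(1,0),(1,1)}" using ex2 by auto
  show ?thesis unfolding eq by (simp add: add.assoc)
qed

definition FL :: "qmat \<Rightarrow> qmat" where
  "FL Y = (\<chi> i j. Y$(1-i)$(1-j))"

lemma qlin_DD: "qlinear (DD G L)"
  unfolding qlinear_def
  apply (intro allI conjI; rule meq)
  subgoal for a X Y i j using ex2[of i] ex2[of j] by (auto simp: DD_def algebra_simps)
  subgoal for a X Y i j using ex2[of i] ex2[of j] by (auto simp: DD_def cscale_def algebra_simps)
  done

lemma qlin_FL: "qlinear FL"
  unfolding qlinear_def
  apply (intro allI conjI; rule meq)
  subgoal for a X Y i j by (auto simp: FL_def)
  subgoal for a X Y i j by (auto simp: FL_def cscale_def)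
  done

lemma tr_DD: "trace (DD G L X) = trace X"
  by (simp add: trace_def sum2 DD_def; simp add: field_simps flip: of_real_add)

lemma tr_FL: "trace (FL X) = trace X"
  by (simp add: trace_def sum2 FL_def)

lemma quad_ineq:
  fixes k x y :: real assumes "\<bar>k\<bar> \<le> 1" shows "0 \<le> x*x + y*y + 2*k*x*y"
proof -
  have "\<bar>2*k*x*y\<bar> \<le> 2*\<bar>x*y\<bar>" using assms
    by (simp add: abs_mult mult_left_le_one_le mult_right_le_one_le mult_le_cancel_right1)
  moreover have "2*\<bar>x*y\<bar> \<le> x*x + y*y"
  proof -
    have "0 \<le> (\<bar>x\<bar>-\<bar>y\<bar>)^2" by simp
    then show ?thesis by (simp add: power2_eq_square algebra_simps abs_mult abs_mult_self_eq)
  qed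
  ultimately show ?thesis by linarith
qed

lemma psd_DD:
  assumes "\<bar>k\<bar> \<le> 1" shows "psd (choi (DD k 1))"
  unfolding psd_def Let_def
proof
  fix v :: "complex^(2\<times>2)"
  define a where "a = v$(0,0)"
  define b where "b = v$(1,1)"
  have eq: "(\<Sum>i\<in>UNIV. \<Sum>j\<in>UNIV. cnj (v $ i) * choi (DD k 1) $ i $ j * v $ j)
     = cnj a * a + cnj b * b + of_real k * (cnj a * b + cnj b * a)"
    unfolding a_def b_def
    by (simp add: sum22 choi_entry DD_def; simp add: algebra_simps)
  have "0 \<le> Re a * Re a + Re b * Re b + 2*k*Re a*Re b" by (rule quad_ineq[OF assms])
  moreover have "0 \<le> Im a * Im a + Im b * Im b + 2*k*Im a*Im b" by (rule quad_ineq[OF assms])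
  ultimately show "Im (\<Sum>i\<in>UNIV. \<Sum>j\<in>UNIV. cnj (v $ i) * choi (DD k 1) $ i $ j * v $ j) = 0 \<and>
          0 \<le> Re (\<Sum>i\<in>UNIV. \<Sum>j\<in>UNIV. cnj (v $ i) * choi (DD k 1) $ i $ j * v $ j)"
    unfolding eq by (simp add: algebra_simps)
qed

lemma psd_FL: "psd (choi FL)"
  unfolding psd_def Let_def
proof
  fix v :: "complex^(2\<times>2)"
  define w where "w = v$(0,1) + v$(1,0)"
  have eq: "(\<Sum>i\<in>UNIV. \<Sum>j\<in>UNIV. cnj (v $ i) * choi FL $ i $ j * v $ j)
     = cnj w * w"
    unfolding w_def
    by (simp add: sum22 choi_entry FL_def; simp add: algebra_simps)
  show "Im (\<Sum>i\<in>UNIV. \<Sum>j\<in>UNIV. cnj (v $ i) * choi FL $ i $ j * v $ j) = 0 \<and>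
          0 \<le> Re (\<Sum>i\<in>UNIV. \<Sum>j\<in>UNIV. cnj (v $ i) * choi FL $ i $ j * v $ j)"
    unfolding eq by (simp add: algebra_simps)
qed

lemma offd: "p*k + q = G \<Longrightarrow> complex_of_real G * x = p *\<^sub>R (complex_of_real k * x) + q *\<^sub>R x"
proof -
  assume h: "p*k + q = G"
  have "(p*k + q) *\<^sub>R x = p *\<^sub>R (complex_of_real k * x) + q *\<^sub>R x"
    by (simp add: scaleR_add_left scaleR_conv_of_real algebra_simps)
  then show ?thesis using h by (simp add: scaleR_conv_of_real)
qed

lemma decomp:
  assumes "L \<noteq> -1"
  shows "DD G L X = ((1+L)/2) *\<^sub>R DD ((L+2*G-1)/(1+L)) 1 X + (1 - (1+L)/2) *\<^sub>R FL (transpose X)"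
proof -
  have "1 + L \<noteq> 0" using assms by linarith
  then have h: "((1+L)/2) * ((L+2*G-1)/(1+L)) + (1 - (1+L)/2) = G"
    by (simp add: field_simps)
  show ?thesis
    apply (intro meq)
    subgoal for i j using ex2[of i] ex2[of j]
      by (auto simp: DD_def FL_def transpose_def offd[OF h]; simp add: scaleR_conv_of_real field_simps)
    done
qed

lemma k_bound:
  fixes G L :: real
  assumes "0 \<le> G" "G \<le> 1" "0 \<le> L"
  shows "\<bar>(L+2*G-1)/(1+L)\<bar> \<le> 1"
proof -
  have "\<bar>L+2*G-1\<bar> \<le> \<bar>1+L\<bar>" using assms by arith
  moreover have "\<bar>1+L\<bar> > 0" using assms by arith
  ultimately show ?thesis by (simp add: abs_divide divide_le_eq_1)
qed

lemma CPTP_DD: "\<bar>k\<bar> \<le> 1 \<Longrightarrow> CPTP (DD k 1)"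
  unfolding CPTP_def using qlin_DD psd_DD tr_DD by blast

lemma CPTP_FL: "CPTP FL"
  unfolding CPTP_def using qlin_FL psd_FL tr_FL by blast

lemma expcosh: "exp (-x) * cosh x = (1 + exp (-2*x)) / 2" for x :: real
proof -
  have "exp (-x) * exp x = 1" by (simp flip: exp_add)
  moreover have "exp (-x) * exp (-x) = exp (-2*x)" by (simp flip: exp_add)
  ultimately show ?thesis by (simp add: cosh_def field_simps)
qed

theorem mainTheorem10:
  fixes \<alpha> c :: real
  assumes "\<alpha> \<ge> 1" and "c > 0"
  shows "(\<forall>t\<ge>0. bij (Lambda \<alpha> c t)) \<and>
    (\<forall>s t. 0 \<le> s \<and> s \<le> t \<longrightarrow>
      (let lam = (\<lambda>\<tau>. exp (- c * \<tau>));
           \<Gamma> = lam (t - s) * cosh (c * t) / cosh (c * s);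
           p1 = (lam (t - s) powr (2 * \<alpha>) + \<Gamma> powr \<alpha>) / 2;
           p2 = (1 - \<Gamma> powr \<alpha>) / 2
       in choi (Vmap \<alpha> c t s) =
            p1 *\<^sub>R proj Phi_p + p2 *\<^sub>R proj Phi_m + (1 - p1 - p2) *\<^sub>R ptrans (proj Psi_p)
          \<and> p1 \<ge> 0 \<and> p2 \<ge> 0 \<and> p1 + p2 \<le> 1
          \<and> (\<exists>p E1 E2. 0 \<le> p \<and> p \<le> 1 \<and> CPTP E1 \<and> CPTP E2 \<and>
               (\<forall>X. Vmap \<alpha> c t s X = p *\<^sub>R E1 X + (1 - p) *\<^sub>R E2 (transpose X)))))"
proof -
  define g where "g x = exp (-\<alpha>*c*x) * cosh (c*x) powr \<alpha>" for x
  define l where "l x = exp (-2*\<alpha>*c*x)" for x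
  have gpos: "g x > 0" for x unfolding g_def by simp
  have lpos: "l x > 0" for x unfolding l_def by simp
  have Lam: "Lambda \<alpha> c x = DD (g x) (l x)" for x unfolding g_def l_def by (rule Lambda_DD)
  have part1: "\<forall>t\<ge>0. bij (Lambda \<alpha> c t)"
    using DD_inv(1) gpos lpos Lam by (metis less_irrefl)
  have part2: "(let lam = (\<lambda>\<tau>. exp (- c * \<tau>));
           \<Gamma> = lam (t - s) * cosh (c * t) / cosh (c * s);
           p1 = (lam (t - s) powr (2 * \<alpha>) + \<Gamma> powr \<alpha>) / 2;
           p2 = (1 - \<Gamma> powr \<alpha>) / 2
       in choi (Vmap \<alpha> c t s) =
            p1 *\<^sub>R proj Phi_p + p2 *\<^sub>R proj Phi_m + (1 - p1 - p2) *\<^sub>R ptrans (proj Psi_p)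
          \<and> p1 \<ge> 0 \<and> p2 \<ge> 0 \<and> p1 + p2 \<le> 1
          \<and> (\<exists>p E1 E2. 0 \<le> p \<and> p \<le> 1 \<and> CPTP E1 \<and> CPTP E2 \<and>
               (\<forall>X. Vmap \<alpha> c t s X = p *\<^sub>R E1 X + (1 - p) *\<^sub>R E2 (transpose X))))"
    if st: "0 \<le> s" "s \<le> t" for s t
  proof -
    define \<Gamma> where "\<Gamma> = exp (- c * (t - s)) * cosh (c * t) / cosh (c * s)"
    define G where "G = \<Gamma> powr \<alpha>"
    define L where "L = exp (- c * (t - s)) powr (2 * \<alpha>)"
    have V: "Vmap \<alpha> c t s = DD (g t / g s) (l t / l s)"
    proof -
      have iv: "inv (DD (g s) (l s)) = DD (1/g s) (1/l s)"
        using DD_inv(2)[of "g s" "l s"] gpos[of s] lpos[of s] by simp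
      show ?thesis unfolding Vmap_def Lam iv by (simp add: fun_eq_iff DD_comp)
    qed
    have gg: "g x = (exp (-(c*x)) * cosh (c*x)) powr \<alpha>" for x
      unfolding g_def powr_mult exp_powr_real by (simp add: mult_ac)
    have Gam: "\<Gamma> = (exp (-(c*t)) * cosh (c*t)) / (exp (-(c * s)) * cosh (c * s))"
    proof -
      have e: "exp (- c * (t - s)) = exp (-(c*t)) / exp (-(c * s))"
        unfolding exp_diff[symmetric] by (rule arg_cong[where f=exp]) (simp add: algebra_simps)
      show ?thesis unfolding \<Gamma>_def e by simp
    qed
    have gG: "g t / g s = G" unfolding G_def Gam gg powr_divide ..
    have lL: "l t / l s = L" unfolding l_def L_def exp_powr_real exp_diff[symmetric]
      by (rule arg_cong[where f=exp]) (simp add: algebra_simps)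
    have Gam0: "\<Gamma> > 0" unfolding \<Gamma>_def by simp
    have Gam1: "\<Gamma> \<le> 1"
    proof -
      have "exp (-2*(c*t)) \<le> exp (-2*(c * s))" using st assms by (simp add: mult_left_mono)
      then have "exp (-(c*t)) * cosh (c*t) \<le> exp (-(c * s)) * cosh (c * s)"
        unfolding expcosh by simp
      moreover have "exp (-(c * s)) * cosh (c * s) > 0" by simp
      ultimately show ?thesis unfolding Gam by simp
    qed
    have G0: "0 < G" unfolding G_def using Gam0 by simp
    have G1: "G \<le> 1" unfolding G_def using Gam0 Gam1 assms by (intro powr_le1) auto
    have L0: "0 < L" unfolding L_def by simp
    have L1: "L \<le> 1" unfolding L_def exp_powr_real using st assms
      by (simp add: mult_nonneg_nonneg mult_nonpos_nonneg)
    have VD: "Vmap \<alpha> c t s = DD G L" unfolding V gG lL ..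
    show ?thesis
      unfolding Let_def \<Gamma>_def[symmetric] G_def[symmetric] L_def[symmetric] VD
    proof (intro conjI)
      show "choi (DD G L) = ((L + G) / 2) *\<^sub>R proj Phi_p + ((1 - G) / 2) *\<^sub>R proj Phi_m +
        (1 - (L + G) / 2 - (1 - G) / 2) *\<^sub>R ptrans (proj Psi_p)" by (rule choi_DD)
      show "0 \<le> (L + G) / 2" "0 \<le> (1 - G) / 2" "(L + G) / 2 + (1 - G) / 2 \<le> 1"
        using G0 G1 L0 L1 by (auto simp: field_simps)
      show "\<exists>p E1 E2. 0 \<le> p \<and> p \<le> 1 \<and> CPTP E1 \<and> CPTP E2 \<and>
          (\<forall>X. DD G L X = p *\<^sub>R E1 X + (1 - p) *\<^sub>R E2 (transpose X))"
        apply (rule exI[of _ "(1+L)/2"], rule exI[of _ "DD ((L+2*G-1)/(1+L)) 1"], rule exI[of _ FL])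
        using G0 G1 L0 L1 decomp[of L G] CPTP_FL CPTP_DD[OF k_bound[of G L]] by auto
    qed
  qed
  show ?thesis using part1 part2 by blast
qed
end
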